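(* Define $X:\Delta^{\mathrm{re}}\to\mathrm{End}(\mathfrak h^* )$ by $$X(\alpha):=-\alpha\,(\alpha|\cdot)+\tfrac12\,\mathrm{id}_{\mathfrak h^*},\qquad\text{i.e. } X(\alpha)(x)=-(\alpha|x)\alpha+\tfrac12x.$$ Then for all real roots $\alpha,\beta$: $X(\alpha)X(\beta)-X(\beta)X(\alpha)=0$ if $(\alpha|\beta)=0$, and $X(\alpha)X(\beta)+X(\beta)X(\alpha)=X(\alpha\pm\beta)$ if $(\alpha|\beta)=\mp1$. Consequently the assignment $X_i\mapsto X(\alpha_i)\otimes\Gamma(\alpha_i)\in\mathrm{End}(\mathfrak h^*\otimes S)$ extends to a representation $\sigma$ of $\mathfrak k$.
   Context: Let $A=(a_{ij})_{1\le i,j\le n}$ be a symmetrizable simply laced generalized Cartan matrix (off-diagonal entries $0$ or $-1$); the Dynkin diagram has an edge between $i\ne j$ iff $a_{ij}=-1$. Let $\mathfrak g$ be the split real Kac–Moody algebra of $A$ with Chevalley generators $e_i,f_i$, Cartan subalgebra $\mathfrak h$ (from a real realization), simple roots $\alpha_1,\dots,\alpha_n\in\mathfrak h^*$, set of real roots $\Delta^{\mathrm{re}}$, and let $(\cdot|\cdot)$ be the nondegenerate invariant symmetric bilinear form induced on $\mathfrak h^*$, with $(\alpha_i|\alpha_j)=a_{ij}$ (so $(\alpha|\alpha)=2$ for real roots). Let $\mathfrak k$ be the fixed-point subalgebra of the Chevalley involution ($e_i\mapsto -f_i$, $f_i\mapsto-e_i$, $h\mapsto -h$), with Berman generators $X_i=e_i-f_i$;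 $\mathfrak k$ is presented by generators $X_1,\dots,X_n$ and relations $[X_i,[X_i,X_j]]=-X_j$ if $a_{ij}=-1$, $[X_i,X_j]=0$ if $a_{ij}=0$. A generalized spin representation is a representation $\rho$ of $\mathfrak k$ with $\rho(X_i)^2=-\frac14\mathrm{id}$. Fix a finite-dimensional real vector space $S$ with positive definite inner product and orthonormal basis, and a generalized spin representation $\rho:\mathfrak k\to\mathrm{End}(S)$ whose values $\rho(X_i)$ are anti-symmetric real matrices in this basis (such exist, e.g. by realifying the generalized spin representations with compact image of Hainke–Köhl–Levy); put $\Gamma(\alpha_i):=2\rho(X_i)$. *)

theory Defs
  imports "HOL-Analysis.Analysis"
begin

definition simply_laced_gcm :: "('i \<Rightarrow> 'i \<Rightarrow> real) \<Rightarrow> bool" where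
  "simply_laced_gcm A \<longleftrightarrow>
     (\<forall>i. A i i = 2) \<and>
     (\<forall>i j. i \<noteq> j \<longrightarrow> A i j = 0 \<or> A i j = -1) \<and>
     (\<forall>i j. A i j = 0 \<longleftrightarrow> A j i = 0)"

definition realization_form ::
  "('i::finite \<Rightarrow> 'i \<Rightarrow> real) \<Rightarrow> ('i \<Rightarrow> real^'h::finite) \<Rightarrow> (real^'h \<Rightarrow> real^'h \<Rightarrow> real) \<Rightarrow> bool" where
  "realization_form A \<alpha> B \<longleftrightarrow>
     inj \<alpha> \<and> independent (range \<alpha>) \<and>
     CARD('h) = 2 * CARD('i) - rank (\<chi> i j. A i j) \<and>
     bilinear B \<and> (\<forall>x y. B x y = B y x) \<and>
     (\<forall>x. (\<forall>y. B x y = 0) \<longrightarrow> x = 0) \<and>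
     (\<forall>i j. B (\<alpha> i) (\<alpha> j) = A i j)"

text \<open>Real roots: the orbit of the simple roots under the Weyl group, which is
  generated by the simple reflections s_i(x) = x - (alpha_i|x) alpha_i.\<close>
inductive_set real_roots ::
  "('i \<Rightarrow> real^'h::finite) \<Rightarrow> (real^'h \<Rightarrow> real^'h \<Rightarrow> real) \<Rightarrow> (real^'h) set"
  for \<alpha> B where
  simple: "\<alpha> i \<in> real_roots \<alpha> B"
| reflect: "\<beta> \<in> real_roots \<alpha> B \<Longrightarrow> \<beta> - B (\<alpha> i) \<beta> *\<^sub>R \<alpha> i \<in> real_roots \<alpha> B"

definition Xop :: "(real^'h::finite \<Rightarrow> real^'h \<Rightarrow> real) \<Rightarrow> real^'h \<Rightarrow> real^'h \<Rightarrow> real^'h" where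
  "Xop B \<alpha> x = - (B \<alpha> x *\<^sub>R \<alpha>) + (1/2) *\<^sub>R x"

definition comm :: "real^'n^'n \<Rightarrow> real^'n^'n \<Rightarrow> real^'n^'n" where
  "comm M N = M ** N - N ** M"

text \<open>Tensor (Kronecker) product of operators, acting on real^('a \<times> 'b) = real^'a \<otimes> real^'b.\<close>
definition tensor_op :: "real^'a^'a \<Rightarrow> real^'b^'b \<Rightarrow> real^('a \<times> 'b)^('a \<times> 'b)" where
  "tensor_op M N = (\<chi> p q. (M $ fst p $ fst q) * (N $ snd p $ snd q))"

text \<open>k is presented by generators X_i and relations; a family Y of operators
  is the image of the generators under a (unique) representation of k iff it
  satisfies the defining relations.\<close>

definition k_relations :: "('i \<Rightarrow> 'i \<Rightarrow> real) \<Rightarrow> ('i \<Rightarrow> real^'n^'n) \<Rightarrow> bool" where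
  "k_relations A Y \<longleftrightarrow>
     (\<forall>i j. i \<noteq> j \<longrightarrow> A i j = -1 \<longrightarrow> comm (Y i) (comm (Y i) (Y j)) = - Y j) \<and>
     (\<forall>i j. i \<noteq> j \<longrightarrow> A i j = 0 \<longrightarrow> comm (Y i) (Y j) = 0)"

text \<open>Generalized spin representation, given by its values R i = rho(X_i).\<close>
definition generalized_spin_rep :: "('i \<Rightarrow> 'i \<Rightarrow> real) \<Rightarrow> ('i \<Rightarrow> real^'n^'n) \<Rightarrow> bool" where
  "generalized_spin_rep A R \<longleftrightarrow> k_relations A R \<and> (\<forall>i. R i ** R i = - (1/4) *\<^sub>R mat 1)"

end

theory Submission imports Defs begin

lemma tensor_mult:
  "tensor_op M N ** tensor_op P Q = tensor_op (M ** P) (N ** Q)"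
proof -
  have "\<And>p q. (\<Sum>r\<in>UNIV. M $ fst p $ fst r * N $ snd p $ snd r * (P $ fst r $ fst q * Q $ snd r $ snd q))
     = (\<Sum>a\<in>UNIV. M $ fst p $ a * P $ a $ fst q) * (\<Sum>b\<in>UNIV. N $ snd p $ b * Q $ b $ snd q)"
    by (simp add: sum_product UNIV_Times_UNIV[symmetric] sum.cartesian_product del: UNIV_Times_UNIV)
       (rule sum.cong, auto simp: algebra_simps)
  then show ?thesis
    by (simp add: tensor_op_def matrix_matrix_mult_def vec_eq_iff)
qed

lemma tensor_diff_left: "tensor_op M N - tensor_op P N = tensor_op (M - P) N"
  by (simp add: tensor_op_def vec_eq_iff algebra_simps)
lemma tensor_add_left: "tensor_op M N + tensor_op P N = tensor_op (M + P) N"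
  by (simp add: tensor_op_def vec_eq_iff algebra_simps)
lemma tensor_neg_right: "tensor_op M (- N) = - tensor_op M N"
  by (simp add: tensor_op_def vec_eq_iff algebra_simps)
lemma tensor_scale_left: "tensor_op (c *\<^sub>R M) N = c *\<^sub>R tensor_op M N"
  by (simp add: tensor_op_def vec_eq_iff algebra_simps)

lemma Xop_linear: assumes "bilinear B" shows "linear (Xop B a)"
proof -
  have l: "linear (B a)" using assms by (simp add: bilinear_def)
  show ?thesis unfolding Xop_def
    by (rule linearI) (simp_all add: linear_add[OF l] linear_scale[OF l] algebra_simps)
qed

lemma XX: assumes "bilinear B"
  shows "Xop B a (Xop B b x) = (B b x * B a b) *\<^sub>R a - (B a x / 2) *\<^sub>R a - (B b x / 2) *\<^sub>R b + (1/4) *\<^sub>R x"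
proof -
  have l: "linear (B a)" using assms by (simp add: bilinear_def)
  show ?thesis unfolding Xop_def
    by (simp add: linear_add[OF l] linear_scale[OF l] linear_neg[OF l] linear_diff[OF l] algebra_simps)
qed

lemma times2: "(x::real^'h) * 2 = 2 *\<^sub>R x"
  by (simp add: vec_eq_iff)

lemma Xop_part1:
  assumes "bilinear B" and sym: "\<And>x y. B x y = B y x"
  shows "(B a b = 0 \<longrightarrow> (\<lambda>x. Xop B a (Xop B b x) - Xop B b (Xop B a x)) = (\<lambda>x. 0)) \<and>
            (B a b = -1 \<longrightarrow> (\<lambda>x. Xop B a (Xop B b x) + Xop B b (Xop B a x)) = Xop B (a + b)) \<and>
            (B a b = 1 \<longrightarrow> (\<lambda>x. Xop B a (Xop B b x) + Xop B b (Xop B a x)) = Xop B (a - b))"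
proof -
  have la: "linear (\<lambda>x. B x y)" for y using assms(1) by (simp add: bilinear_def)
  have ba: "B b a = B a b" using sym by simp
  have pl: "B (a + b) x = B a x + B b x" for x using linear_add[OF la] by simp
  have mi: "B (a - b) x = B a x - B b x" for x using linear_diff[OF la] by simp
  have e1: "Xop B a (Xop B b x) = (B b x * B a b) *\<^sub>R a - (B a x / 2) *\<^sub>R a - (B b x / 2) *\<^sub>R b + (1/4) *\<^sub>R x" for x
    by (rule XX[OF assms(1)])
  have e2: "Xop B b (Xop B a x) = (B a x * B a b) *\<^sub>R b - (B b x / 2) *\<^sub>R b - (B a x / 2) *\<^sub>R a + (1/4) *\<^sub>R x" for x
    using XX[OF assms(1), of b a x] ba by simp
  show ?thesis
    by (auto simp: fun_eq_iff e1 e2 Xop_def[of B "a+b"] Xop_def[of B "a-b"] pl mi algebra_simps times2)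
qed

lemma msub_l: "(A::real^'n^'n) ** (B - C) = A ** B - A ** C"
  by (simp add: vec_eq_iff matrix_matrix_mult_def sum_subtractf algebra_simps)
lemma msub_r: "((B::real^'n^'n) - C) ** A = B ** A - C ** A"
  by (simp add: vec_eq_iff matrix_matrix_mult_def sum_subtractf algebra_simps)

lemma mneg_v: "(- (P::real^'n^'m)) *v v = - (P *v v)"
  by (simp add: vec_eq_iff matrix_vector_mult_def sum_negf)

lemma mvneg: "(P::real^'n^'m) *v (- v) = - (P *v v)"
  by (simp add: vec_eq_iff matrix_vector_mult_def sum_negf)

lemma solve_w: fixes u w :: "'a::real_vector"
  assumes "- ((1/4) *\<^sub>R u) - w - (w - - ((1/4) *\<^sub>R u)) = - u"
  shows "w = (1/4) *\<^sub>R u"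
proof -
  have q: "(1/4) *\<^sub>R u + (1/4) *\<^sub>R u = (1/2) *\<^sub>R u"
    by (simp add: scaleR_add_left[symmetric])
  have h: "u = (1/2) *\<^sub>R u + (1/2) *\<^sub>R u"
    by (simp add: scaleR_add_left[symmetric])
  have "u = w + w + (1/2) *\<^sub>R u" using assms q by (simp add: algebra_simps)
  then have "w + w = (1/2) *\<^sub>R u" using h by (metis add_right_imp_eq)
  then have "2 *\<^sub>R w = (1/2) *\<^sub>R u" by (simp add: scaleR_2)
  then have "(1/2) *\<^sub>R (2 *\<^sub>R w) = (1/2) *\<^sub>R ((1/2) *\<^sub>R u)" by simp
  then show ?thesis by simp
qed

lemma tensor_comb: "- tensor_op P1 N - tensor_op P2 N - (tensor_op P3 N + tensor_op P4 N)
   = - tensor_op (P1 + P2 + P3 + P4) N"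
  by (simp add: tensor_op_def vec_eq_iff algebra_simps)

lemma Xop_part2:
  assumes "bilinear B" and sym: "\<And>x y. B x y = B y x" and aa: "B a a = 2" and ab: "B a b = -1"
  shows "Xop B a (Xop B a (Xop B b x)) + Xop B a (Xop B b (Xop B a x))
       + (Xop B a (Xop B b (Xop B a x)) + Xop B b (Xop B a (Xop B a x))) = Xop B b x"
proof -
  have la: "linear (Xop B a)" by (rule Xop_linear[OF assms(1)])
  have l2: "linear (\<lambda>x. B x y)" for y using assms(1) by (simp add: bilinear_def)
  have S: "Xop B a (Xop B b y) + Xop B b (Xop B a y) = Xop B (a + b) y" for y
    using Xop_part1[OF assms(1) sym, of a b] ab by (simp add: fun_eq_iff)
  have "B a (a + b) = 1"
    using assms(1) aa ab by (simp add: bilinear_def linear_add)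
  then have S2: "Xop B a (Xop B (a+b) y) + Xop B (a+b) (Xop B a y) = Xop B (a - (a + b)) y" for y
    using Xop_part1[OF assms(1) sym, of a "a+b"] by (simp add: fun_eq_iff)
  have "Xop B a (Xop B a (Xop B b x)) + Xop B a (Xop B b (Xop B a x))
       + (Xop B a (Xop B b (Xop B a x)) + Xop B b (Xop B a (Xop B a x)))
     = Xop B a (Xop B a (Xop B b x) + Xop B b (Xop B a x)) + Xop B (a+b) (Xop B a x)"
    using S[of "Xop B a x"] by (simp add: linear_add[OF la])
  also have "\<dots> = Xop B a (Xop B (a+b) x) + Xop B (a+b) (Xop B a x)" using S by simp
  also have "\<dots> = Xop B (-b) x" using S2 by simp
  also have "\<dots> = Xop B b x"
  proof -
    have "B (-b) x = - B b x" using linear_neg[OF l2] by simp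
    then show ?thesis by (simp add: Xop_def)
  qed
  finally show ?thesis .
qed

theorem proposition5p3:
  fixes A :: "'i::finite \<Rightarrow> 'i \<Rightarrow> real"
    and \<alpha> :: "'i \<Rightarrow> real^'h::finite"
    and B :: "real^'h \<Rightarrow> real^'h \<Rightarrow> real"
    and \<rho> :: "'i \<Rightarrow> real^'s::finite^'s"
  assumes "simply_laced_gcm A"
    and "realization_form A \<alpha> B"
    and "generalized_spin_rep A \<rho>"
    and "\<forall>i. transpose (\<rho> i) = - \<rho> i"
  shows "(\<forall>a\<in>real_roots \<alpha> B. \<forall>b\<in>real_roots \<alpha> B.
            (B a b = 0 \<longrightarrow> (\<lambda>x. Xop B a (Xop B b x) - Xop B b (Xop B a x)) = (\<lambda>x. 0)) \<and>
            (B a b = -1 \<longrightarrow> (\<lambda>x. Xop B a (Xop B b x) + Xop B b (Xop B a x)) = Xop B (a + b)) \<and>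
            (B a b = 1 \<longrightarrow> (\<lambda>x. Xop B a (Xop B b x) + Xop B b (Xop B a x)) = Xop B (a - b)))
         \<and> k_relations A (\<lambda>i. tensor_op (matrix (Xop B (\<alpha> i))) (2 *\<^sub>R \<rho> i))"
proof -
  have bil: "bilinear B" and sym: "\<And>x y. B x y = B y x" and BA: "\<And>i j. B (\<alpha> i) (\<alpha> j) = A i j"
    using assms(2) unfolding realization_form_def by auto
  have Aii: "A i i = 2" for i using assms(1) unfolding simply_laced_gcm_def by auto
  have lin: "linear (Xop B a)" for a by (rule Xop_linear[OF bil])
  define M where "M i = matrix (Xop B (\<alpha> i))" for i
  define G where "G i = 2 *\<^sub>R \<rho> i" for i
  have Mv: "M i *v x = Xop B (\<alpha> i) x" for i x unfolding M_def
    by (rule matrix_works[OF lin[unfolded linear_matrix_vector_mul_eq[symmetric]]])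
  have spin: "k_relations A \<rho>" and sq: "\<And>i. \<rho> i ** \<rho> i = - (1/4) *\<^sub>R mat 1"
    using assms(3) unfolding generalized_spin_rep_def by auto
  have sqv: "\<rho> i *v (\<rho> i *v v) = - (1/4) *\<^sub>R v" for i v
    using sq[of i] by (simp add: mneg_v matrix_vector_mul_assoc scaleR_matrix_vector_assoc[symmetric])
  have Gv: "G i *v v = 2 *\<^sub>R (\<rho> i *v v)" for i v
    unfolding G_def by (simp add: scaleR_matrix_vector_assoc[symmetric])
  note vsimps = matrix_vector_mul_assoc[symmetric] matrix_vector_mult_diff_rdistrib
     matrix_vector_mult_add_rdistrib matrix_vector_mult_scaleR matrix_vector_mult_diff_distrib
     matrix_vector_right_distrib mneg_v mvneg
  have part1: "\<forall>a\<in>real_roots \<alpha> B. \<forall>b\<in>real_roots \<alpha> B.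
            (B a b = 0 \<longrightarrow> (\<lambda>x. Xop B a (Xop B b x) - Xop B b (Xop B a x)) = (\<lambda>x. 0)) \<and>
            (B a b = -1 \<longrightarrow> (\<lambda>x. Xop B a (Xop B b x) + Xop B b (Xop B a x)) = Xop B (a + b)) \<and>
            (B a b = 1 \<longrightarrow> (\<lambda>x. Xop B a (Xop B b x) + Xop B b (Xop B a x)) = Xop B (a - b))"
    using Xop_part1[OF bil sym] by blast
  have zero: "comm (tensor_op (M i) (G i)) (tensor_op (M j) (G j)) = 0"
    if ij: "i \<noteq> j" and A0: "A i j = 0" for i j
  proof -
    have r: "comm (\<rho> i) (\<rho> j) = 0" using spin ij A0 unfolding k_relations_def by auto
    have rv: "\<rho> i *v (\<rho> j *v v) = \<rho> j *v (\<rho> i *v v)" for v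
      using arg_cong[OF r, of "\<lambda>P. P *v v"] by (simp add: comm_def vsimps)
    have GG: "G i ** G j = G j ** G i"
      by (simp add: matrix_eq vsimps Gv rv)
    have xz: "Xop B (\<alpha> i) (Xop B (\<alpha> j) x) - Xop B (\<alpha> j) (Xop B (\<alpha> i) x) = 0" for x
      using Xop_part1[OF bil sym, of "\<alpha> i" "\<alpha> j"] BA[of i j] A0 by (simp add: fun_eq_iff)
    have MM: "M i ** M j = M j ** M i"
      using xz by (simp add: matrix_eq vsimps Mv)
    show ?thesis by (simp add: comm_def tensor_mult GG MM)
  qed
  have one: "comm (tensor_op (M i) (G i)) (comm (tensor_op (M i) (G i)) (tensor_op (M j) (G j)))
      = - tensor_op (M j) (G j)"
    if ij: "i \<noteq> j" and A1: "A i j = -1" for i j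
  proof -
    have r: "comm (\<rho> i) (comm (\<rho> i) (\<rho> j)) = - \<rho> j" using spin ij A1 unfolding k_relations_def by auto
    have e: "\<rho> i *v (\<rho> i *v (\<rho> j *v v)) - \<rho> i *v (\<rho> j *v (\<rho> i *v v))
         - (\<rho> i *v (\<rho> j *v (\<rho> i *v v)) - \<rho> j *v (\<rho> i *v (\<rho> i *v v))) = - (\<rho> j *v v)" for v
      using arg_cong[OF r, of "\<lambda>P. P *v v"] by (simp add: comm_def vsimps)
    have rv: "\<rho> i *v (\<rho> j *v (\<rho> i *v v)) = (1/4) *\<^sub>R (\<rho> j *v v)" for v
      using e[of v] by (intro solve_w) (simp add: sqv mvneg matrix_vector_mult_scaleR)
    have g1: "G i ** (G i ** G j) = - G j" by (simp add: matrix_eq vsimps Gv sqv)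
    have g2: "G i ** (G j ** G i) = G j" by (simp add: matrix_eq vsimps Gv rv)
    have g3: "(G i ** G j) ** G i = G j" by (simp add: matrix_eq vsimps Gv rv)
    have g4: "(G j ** G i) ** G i = - G j" by (simp add: matrix_eq vsimps Gv sqv)
    have xz: "Xop B (\<alpha> i) (Xop B (\<alpha> i) (Xop B (\<alpha> j) x)) + Xop B (\<alpha> i) (Xop B (\<alpha> j) (Xop B (\<alpha> i) x))
       + (Xop B (\<alpha> i) (Xop B (\<alpha> j) (Xop B (\<alpha> i) x)) + Xop B (\<alpha> j) (Xop B (\<alpha> i) (Xop B (\<alpha> i) x))) = Xop B (\<alpha> j) x" for x
      using Xop_part2[OF bil sym] BA[of i j] BA[of i i] A1 Aii[of i] by simp
    have MM: "M i ** (M i ** M j) + M i ** (M j ** M i) + (M i ** M j) ** M i + (M j ** M i) ** M i = M j"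
      using xz by (simp add: matrix_eq vsimps Mv add.assoc)
    show ?thesis
      by (simp add: comm_def msub_l msub_r tensor_mult g1 g2 g3 g4 tensor_neg_right tensor_comb MM)
  qed
  show ?thesis
    using part1 zero one unfolding k_relations_def M_def G_def by blast
qed

end
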